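(* Let $A\in\mathbb{R}^{n\times n}$, $F\in\mathbb{R}^{m\times m}$ and $g\in\mathbb{R}^{m\times 1}$ be arbitrary. Set $G=g\otimes I_n$ and $H=I_m\otimes A+F\otimes I_n$. Then there exists a nonsingular $mn\times mn$ matrix $T$ such that $$\begin{bmatrix}G & HG & \cdots & H^{m-1}G\end{bmatrix}=\begin{bmatrix}g\otimes I_n & (Fg)\otimes I_n & \cdots & (F^{m-1}g)\otimes I_n\end{bmatrix}T.$$
   Context: $\otimes$ denotes the Kronecker product. *)

theory Defs
  imports "Jordan_Normal_Form.Matrix"
begin

definition kron :: "'a :: times mat \<Rightarrow> 'a mat \<Rightarrow> 'a mat" where
  "kron A B = mat (dim_row A * dim_row B) (dim_col A * dim_col B)
     (\<lambda>(i,j). A $$ (i div dim_row B, j div dim_col B) * B $$ (i mod dim_row B, j mod dim_col B))"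

definition block_row :: "nat \<Rightarrow> nat \<Rightarrow> nat \<Rightarrow> (nat \<Rightarrow> 'a mat) \<Rightarrow> 'a mat" where
  "block_row k r c B = mat r (k * c) (\<lambda>(i,j). B (j div c) $$ (i, j mod c))"

end

theory Submission
  imports Defs "Jordan_Normal_Form.Determinant"
begin

fun cc :: "real mat \<Rightarrow> nat \<Rightarrow> nat \<Rightarrow> nat \<Rightarrow> nat \<Rightarrow> nat \<Rightarrow> real" where
  "cc A n 0 j x y = (if j = 0 \<and> x = y then 1 else 0)"
| "cc A n (Suc k) j x y = (\<Sum>z<n. A $$ (x,z) * cc A n k j z y) + (if j = 0 then 0 else cc A n k (j - 1) x y)"

lemma cc_zero: "k < j \<Longrightarrow> cc A n k j x y = 0"
  by (induction k arbitrary: j x y) auto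

lemma cc_diag: "cc A n k k x y = (if x = y then 1 else 0)"
  by (induction k arbitrary: x y) (auto simp: cc_zero)

lemma sum_add_split: "(\<Sum>l<(c::nat)+n. f l) = (\<Sum>l<c. f l) + (\<Sum>b<n. f (c+b))"
  by (induction n) (auto simp: add.assoc)

lemma sum_split_div: "(\<Sum>l<(m::nat)*n. f l) = (\<Sum>a<m. \<Sum>b<n. f (a*n+b))"
proof (induction m)
  case (Suc m)
  have "(\<Sum>l<Suc m*n. f l) = (\<Sum>l<m*n + n. f l)" by (simp add: add.commute)
  also have "\<dots> = (\<Sum>l<m*n. f l) + (\<Sum>b<n. f (m*n+b))" by (rule sum_add_split)
  finally show ?case using Suc by simp
qed simp

lemma mult_entry: "X \<in> carrier_mat r s \<Longrightarrow> Y \<in> carrier_mat s t \<Longrightarrow> i < r \<Longrightarrow> q < t \<Longrightarrow>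
  (X * Y) $$ (i,q) = (\<Sum>l<s. X $$ (i,l) * Y $$ (l,q))"
  by (auto simp: scalar_prod_def lessThan_atLeast0 intro!: sum.cong)

lemma pow_Suc_left: "X \<in> carrier_mat n n \<Longrightarrow> X ^\<^sub>m Suc k = X * X ^\<^sub>m k"
proof (induction k)
  case 0 then show ?case by simp
next
  case (Suc k)
  have "X ^\<^sub>m Suc (Suc k) = (X * X ^\<^sub>m k) * X" using Suc by simp
  also have "\<dots> = X * (X ^\<^sub>m k * X)" using Suc.prems by (simp add: assoc_mult_mat[of _ n n _ n _ n])
  finally show ?case by simp
qed



lemma idx_lt: "a < (m::nat) \<Longrightarrow> b < n \<Longrightarrow> a*n+b < m*n"
proof -
  assume a: "a < m" and b: "b < n"
  have "a*n+b < a*n+n" using b by simp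
  also have "\<dots> = Suc a * n" by simp
  also have "\<dots> \<le> m * n" using a by (intro mult_le_mono1) simp
  finally show ?thesis .
qed

lemma kron_entry: "i < dim_row X * dim_row Y \<Longrightarrow> j < dim_col X * dim_col Y \<Longrightarrow>
  kron X Y $$ (i,j) = X $$ (i div dim_row Y, j div dim_col Y) * Y $$ (i mod dim_row Y, j mod dim_col Y)"
  by (simp add: kron_def)

lemma kron_dim[simp]: "dim_row (kron X Y) = dim_row X * dim_row Y" "dim_col (kron X Y) = dim_col X * dim_col Y"
  by (simp_all add: kron_def)

lemma main_formula:
  fixes A F g :: "real mat" and m n :: nat
  assumes A: "A \<in> carrier_mat n n" and F: "F \<in> carrier_mat m m" and g: "g \<in> carrier_mat m 1"
  defines "H \<equiv> kron (1\<^sub>m m) A + kron F (1\<^sub>m n)" and "G \<equiv> kron g (1\<^sub>m n)"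
  shows "i < m*n \<Longrightarrow> q < n \<Longrightarrow> (H ^\<^sub>m k * G) $$ (i,q) =
     (\<Sum>j\<le>k. (F ^\<^sub>m j * g) $$ (i div n, 0) * cc A n k j (i mod n) q)"
proof (induction k arbitrary: i q)
  have Hc: "H \<in> carrier_mat (m*n) (m*n)" using A F unfolding H_def by auto
  have Gc: "G \<in> carrier_mat (m*n) n" using g unfolding G_def by auto
  let ?v = "\<lambda>j a. (F ^\<^sub>m j * g) $$ (a, 0)"
  {
    case 0
    then have r: "i div n < m" and s: "i mod n < n"
      by (auto simp: less_mult_imp_div_less)
    have "(H ^\<^sub>m 0 * G) $$ (i,q) = G $$ (i,q)" using Hc Gc by simp
    also have "\<dots> = g $$ (i div n, 0) * (if i mod n = q then 1 else 0)"
      using 0 g s unfolding G_def by (simp add: kron_entry)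
    also have "\<dots> = (\<Sum>j\<le>0. ?v j (i div n) * cc A n 0 j (i mod n) q)"
      using g r F by simp
    finally show ?case .
  next
    case (Suc k)
    then have r: "i div n < m" and s: "i mod n < n"
      by (auto simp: less_mult_imp_div_less)
    define S where "S a b = (\<Sum>j\<le>k. ?v j a * cc A n k j b q)" for a b
    have "(H ^\<^sub>m Suc k * G) $$ (i,q) = (H * (H ^\<^sub>m k * G)) $$ (i,q)"
      unfolding pow_Suc_left[OF Hc] using Hc Gc by (intro arg_cong[where f="\<lambda>X. X $$ (i,q)"] assoc_mult_mat) auto
    also have "\<dots> = (\<Sum>l<m*n. H $$ (i,l) * (H ^\<^sub>m k * G) $$ (l,q))"
      using Hc Gc Suc by (intro mult_entry[of _ "m*n" "m*n" _ n]) auto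
    also have "\<dots> = (\<Sum>a<m. \<Sum>b<n. H $$ (i,a*n+b) * S a b)"
      unfolding sum_split_div
    proof (intro sum.cong refl)
      fix a b assume a: "a \<in> {..<m}" and b: "b \<in> {..<n}"
      have lt: "a*n+b < m*n" using a b by (simp add: idx_lt)
      show "H $$ (i, a * n + b) * (H ^\<^sub>m k * G) $$ (a * n + b, q) = H $$ (i, a * n + b) * S a b"
        using Suc.IH[OF lt Suc.prems(2)] b unfolding S_def by simp
    qed
    also have "\<dots> = (\<Sum>a<m. \<Sum>b<n. ((if i div n = a then A $$ (i mod n, b) else 0)
         + F $$ (i div n, a) * (if i mod n = b then 1 else 0)) * S a b)"
    proof (intro sum.cong refl)
      fix a b assume a: "a \<in> {..<m}" and b: "b \<in> {..<n}"
      have lt: "a*n+b < m*n" using a b by (simp add: idx_lt)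
      have d: "(a*n+b) div n = a" "(a*n+b) mod n = b" using b by auto
      show "H $$ (i, a*n+b) * S a b = ((if i div n = a then A $$ (i mod n, b) else 0)
         + F $$ (i div n, a) * (if i mod n = b then 1 else 0)) * S a b"
        using lt Suc.prems A F a b r s unfolding H_def by (simp add: kron_entry d)
    qed
    also have "\<dots> = (\<Sum>b<n. A $$ (i mod n, b) * S (i div n) b) + (\<Sum>a<m. F $$ (i div n, a) * S a (i mod n))"
    proof -
      have e1: "(\<Sum>a<m. \<Sum>b<n. (if i div n = a then A $$ (i mod n, b) else 0) * S a b) = (\<Sum>b<n. A $$ (i mod n, b) * S (i div n) b)"
      proof -
        have "(\<Sum>a<m. \<Sum>b<n. (if i div n = a then A $$ (i mod n, b) else 0) * S a b)
          = (\<Sum>a<m. if i div n = a then (\<Sum>b<n. A $$ (i mod n, b) * S a b) else 0)"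
          by (intro sum.cong refl) auto
        also have "\<dots> = (\<Sum>b<n. A $$ (i mod n, b) * S (i div n) b)" using r by (simp add: sum.delta)
        finally show ?thesis .
      qed
      have e2: "(\<Sum>a<m. \<Sum>b<n. F $$ (i div n, a) * (if i mod n = b then 1 else 0) * S a b) = (\<Sum>a<m. F $$ (i div n, a) * S a (i mod n))"
      proof (intro sum.cong refl)
        fix a
        have "(\<Sum>b<n. F $$ (i div n, a) * (if i mod n = b then 1 else 0) * S a b) = (\<Sum>b<n. if i mod n = b then F $$ (i div n, a) * S a b else 0)"
          by (intro sum.cong refl) auto
        also have "\<dots> = F $$ (i div n, a) * S a (i mod n)" using s by (simp add: sum.delta)
        finally show "(\<Sum>b<n. F $$ (i div n, a) * (if i mod n = b then 1 else 0) * S a b) = F $$ (i div n, a) * S a (i mod n)" .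
      qed
      show ?thesis unfolding e1[symmetric] e2[symmetric] by (simp add: sum.distrib distrib_right)
    qed
    also have "(\<Sum>b<n. A $$ (i mod n, b) * S (i div n) b) = (\<Sum>j\<le>k. ?v j (i div n) * (\<Sum>z<n. A $$ (i mod n, z) * cc A n k j z q))"
      unfolding S_def by (simp add: sum_distrib_left sum.swap[of _ "{..<n}"] mult_ac)
    also have "(\<Sum>a<m. F $$ (i div n, a) * S a (i mod n)) = (\<Sum>j\<le>k. ?v (Suc j) (i div n) * cc A n k j (i mod n) q)"
    proof -
      have "(\<Sum>a<m. F $$ (i div n, a) * S a (i mod n)) = (\<Sum>j\<le>k. (\<Sum>a<m. F $$ (i div n, a) * ?v j a) * cc A n k j (i mod n) q)"
        unfolding S_def by (simp add: sum_distrib_left sum_distrib_right sum.swap[of _ "{..<m}"] mult_ac)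
      also have "\<dots> = (\<Sum>j\<le>k. ?v (Suc j) (i div n) * cc A n k j (i mod n) q)"
      proof (intro sum.cong refl)
        fix j
        have "F ^\<^sub>m Suc j * g = F * (F ^\<^sub>m j * g)"
          unfolding pow_Suc_left[OF F] using F g by (intro assoc_mult_mat) auto
        then have "?v (Suc j) (i div n) = (F * (F ^\<^sub>m j * g)) $$ (i div n, 0)" by (rule arg_cong)
        also have "\<dots> = (\<Sum>a<m. F $$ (i div n, a) * ?v j a)"
          by (rule mult_entry[of _ m m _ 1]) (use F g r in auto)
        finally have "?v (Suc j) (i div n) = (\<Sum>a<m. F $$ (i div n, a) * ?v j a)" .
        then show "(\<Sum>a<m. F $$ (i div n, a) * ?v j a) * cc A n k j (i mod n) q = ?v (Suc j) (i div n) * cc A n k j (i mod n) q"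
          by simp
      qed
      finally show ?thesis .
    qed
    also have "(\<Sum>j\<le>k. ?v j (i div n) * (\<Sum>z<n. A $$ (i mod n, z) * cc A n k j z q)) +
       (\<Sum>j\<le>k. ?v (Suc j) (i div n) * cc A n k j (i mod n) q) =
       (\<Sum>j\<le>Suc k. ?v j (i div n) * cc A n (Suc k) j (i mod n) q)"
    proof -
      have "(\<Sum>j\<le>Suc k. ?v j (i div n) * cc A n (Suc k) j (i mod n) q) =
        (\<Sum>j\<le>Suc k. ?v j (i div n) * (\<Sum>z<n. A $$ (i mod n, z) * cc A n k j z q)) +
        (\<Sum>j\<le>Suc k. ?v j (i div n) * (if j = 0 then 0 else cc A n k (j - 1) (i mod n) q))"
        by (simp add: sum.distrib distrib_left)
      also have "(\<Sum>j\<le>Suc k. ?v j (i div n) * (\<Sum>z<n. A $$ (i mod n, z) * cc A n k j z q)) =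
         (\<Sum>j\<le>k. ?v j (i div n) * (\<Sum>z<n. A $$ (i mod n, z) * cc A n k j z q))"
        by (simp add: cc_zero)
      also have "(\<Sum>j\<le>Suc k. ?v j (i div n) * (if j = 0 then 0 else cc A n k (j - 1) (i mod n) q)) =
         (\<Sum>j\<le>k. ?v (Suc j) (i div n) * cc A n k j (i mod n) q)"
        by (subst sum.atMost_Suc_shift) simp
      finally show ?thesis by simp
    qed
    finally show ?case .
  }
qed


theorem lemma3:
  fixes A F g :: "real mat" and m n :: nat
  assumes "A \<in> carrier_mat n n" and "F \<in> carrier_mat m m" and "g \<in> carrier_mat m 1"
  shows "\<exists>T \<in> carrier_mat (m * n) (m * n). invertible_mat T \<and>
    block_row m (m * n) n
      (\<lambda>k. (kron (1\<^sub>m m) A + kron F (1\<^sub>m n)) ^\<^sub>m k * kron g (1\<^sub>m n))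
    = block_row m (m * n) n (\<lambda>k. kron (F ^\<^sub>m k * g) (1\<^sub>m n)) * T"
proof -
  note A = assms(1) and F = assms(2) and g = assms(3)
  define T where "T = mat (m*n) (m*n) (\<lambda>(l,j). cc A n (j div n) (l div n) (l mod n) (j mod n))"
  define B where "B = block_row m (m * n) n (\<lambda>k. kron (F ^\<^sub>m k * g) (1\<^sub>m n))"
  let ?v = "\<lambda>j a. (F ^\<^sub>m j * g) $$ (a, 0)"
  have Tc: "T \<in> carrier_mat (m*n) (m*n)" unfolding T_def by simp
  have Bc: "B \<in> carrier_mat (m*n) (m*n)" unfolding B_def block_row_def by (simp add: mult.commute)
  have ut: "upper_triangular T"
    unfolding upper_triangular_def
  proof (intro allI impI)
    fix l j assume l: "l < dim_row T" and jl: "j < l"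
    have "j div n \<le> l div n" using jl by (simp add: div_le_mono)
    show "T $$ (l, j) = 0"
    proof (cases "j div n < l div n")
      case True
      then show ?thesis using l jl Tc by (simp add: T_def cc_zero)
    next
      case False
      then have eq: "j div n = l div n" using \<open>j div n \<le> l div n\<close> by simp
      then have "l mod n \<noteq> j mod n" using jl by (metis div_mult_mod_eq less_irrefl)
      then show ?thesis using l jl Tc eq by (simp add: T_def cc_diag)
    qed
  qed
  have "diag_mat T = map (\<lambda>_. 1) [0..<m*n]"
    unfolding diag_mat_def using Tc by (auto simp: T_def cc_diag)
  then have "det T = 1" using det_upper_triangular[OF ut Tc]
    by (simp add: prod_list_replicate map_replicate_trivial)
  then obtain Ti where "Ti \<in> carrier_mat (m*n) (m*n)" "Ti * T = 1\<^sub>m (m*n)" "T * Ti = 1\<^sub>m (m*n)"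
    using det_non_zero_imp_unit[OF Tc, of "()"] unfolding Units_def ring_mat_def by auto
  then have inv: "invertible_mat T" using Tc
    unfolding invertible_mat_def inverts_mat_def square_mat.simps by auto
  have eq: "block_row m (m * n) n
      (\<lambda>k. (kron (1\<^sub>m m) A + kron F (1\<^sub>m n)) ^\<^sub>m k * kron g (1\<^sub>m n)) = B * T"
  proof (rule eq_matI)
    show "dim_row (block_row m (m * n) n
      (\<lambda>k. (kron (1\<^sub>m m) A + kron F (1\<^sub>m n)) ^\<^sub>m k * kron g (1\<^sub>m n))) = dim_row (B * T)"
      using Bc by (simp add: block_row_def)
    show "dim_col (block_row m (m * n) n
      (\<lambda>k. (kron (1\<^sub>m m) A + kron F (1\<^sub>m n)) ^\<^sub>m k * kron g (1\<^sub>m n))) = dim_col (B * T)"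
      using Tc by (simp add: block_row_def mult.commute)
    fix i j assume i: "i < dim_row (B * T)" and j: "j < dim_col (B * T)"
    then have i: "i < m*n" and j: "j < m*n" using Bc Tc by auto
    define k where "k = j div n"
    define q where "q = j mod n"
    have k: "k < m" unfolding k_def using j by (simp add: less_mult_imp_div_less)
    have q: "q < n" unfolding q_def using j by (metis mod_less_divisor neq0_conv mult_0_right not_less0)
    have r: "i div n < m" and s: "i mod n < n"
      using i by (auto simp: less_mult_imp_div_less, metis mod_less_divisor neq0_conv mult_0_right not_less0)
    have "block_row m (m * n) n
      (\<lambda>k. (kron (1\<^sub>m m) A + kron F (1\<^sub>m n)) ^\<^sub>m k * kron g (1\<^sub>m n)) $$ (i,j)
      = ((kron (1\<^sub>m m) A + kron F (1\<^sub>m n)) ^\<^sub>m k * kron g (1\<^sub>m n)) $$ (i,q)"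
      using i j unfolding block_row_def k_def q_def by (simp add: mult.commute)
    also have "\<dots> = (\<Sum>a\<le>k. ?v a (i div n) * cc A n k a (i mod n) q)"
      by (rule main_formula[OF A F g i q])
    also have "\<dots> = (\<Sum>a<m. ?v a (i div n) * cc A n k a (i mod n) q)"
      using k by (intro sum.mono_neutral_left) (auto simp: cc_zero)
    also have "\<dots> = (\<Sum>a<m. \<Sum>b<n. B $$ (i, a*n+b) * T $$ (a*n+b, j))"
    proof (intro sum.cong refl)
      fix a assume a: "a \<in> {..<m}"
      have "(\<Sum>b<n. B $$ (i, a*n+b) * T $$ (a*n+b, j)) =
            (\<Sum>b<n. if i mod n = b then ?v a (i div n) * cc A n k a (i mod n) q else 0)"
      proof (intro sum.cong refl)
        fix b assume b: "b \<in> {..<n}"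
        have lt: "a*n+b < m*n" using a b by (simp add: idx_lt)
        have d: "(a*n+b) div n = a" "(a*n+b) mod n = b" using b by auto
        have "B $$ (i, a*n+b) = kron (F ^\<^sub>m a * g) (1\<^sub>m n) $$ (i, b)"
          using i lt d unfolding B_def block_row_def by simp
        also have "\<dots> = ?v a (i div n) * (if i mod n = b then 1 else 0)"
          using i b F g s by (simp add: kron_entry)
        finally show "B $$ (i, a*n+b) * T $$ (a*n+b, j) = (if i mod n = b then ?v a (i div n) * cc A n k a (i mod n) q else 0)"
          using lt j d unfolding T_def k_def q_def by simp
      qed
      also have "\<dots> = ?v a (i div n) * cc A n k a (i mod n) q" using s by (simp add: sum.delta)
      finally show "?v a (i div n) * cc A n k a (i mod n) q = (\<Sum>b<n. B $$ (i, a*n+b) * T $$ (a*n+b, j))" by simp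
    qed
    also have "\<dots> = (\<Sum>l<m*n. B $$ (i, l) * T $$ (l, j))" by (simp add: sum_split_div)
    also have "\<dots> = (B * T) $$ (i,j)" by (rule mult_entry[symmetric, OF Bc Tc i j])
    finally show "block_row m (m * n) n
      (\<lambda>k. (kron (1\<^sub>m m) A + kron F (1\<^sub>m n)) ^\<^sub>m k * kron g (1\<^sub>m n)) $$ (i,j) = (B * T) $$ (i,j)" .
  qed
  show ?thesis using Tc inv eq unfolding B_def by blast
qed

end
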